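(* Let $V$ be a standard $U_q(\widehat{\mathfrak{sl}}_2)$-module of diameter $1$ and let $W$ be any $U_q(\widehat{\mathfrak{sl}}_2)$-module. Then for every integer $n\ge1$, on $V\otimes W$: (i) $R^n$ acts as $1\otimes R^n+[n]_qR_n$, where $R_n=uq^{n-1}e_0^+\otimes R^{n-1}K_0+vq^{1-n}e_1^-K_1\otimes R^{n-1}K_1$; (ii) $L^n$ acts as $1\otimes L^n+[n]_qL_n$, where $L_n=u^*q^{1-n}e_1^+\otimes K_1L^{n-1}+v^*q^{n-1}e_0^-K_0\otimes K_0L^{n-1}$. (Here an element $X\otimes Y$ acts on $V\otimes W$ by $v\otimes w\mapsto Xv\otimes Yw$.)
   Context: Let $\mathbb F$ be an algebraically closed field and fix nonzero $q\in\mathbb F$ with $q^2\ne1$; write $[n]_q=(q^n-q^{-n})/(q-q^{-1})$. $U_q(\widehat{\mathfrak{sl}}_2)$ is the associative unital $\mathbb F$-algebra with generators $e_i^{\pm},K_i^{\pm1}$ ($i\in\{0,1\}$) and relations $K_iK_i^{-1}=K_i^{-1}K_i=1$, $K_0K_1=K_1K_0$, $K_ie_i^{\pm}K_i^{-1}=q^{\pm2}e_i^{\pm}$, $K_ie_j^{\pm}K_i^{-1}=q^{\mp2}e_j^{\pm}$ ($i\ne j$), $e_i^+e_i^--e_i^-e_i^+=(K_i-K_i^{-1})/(q-q^{-1})$, $e_0^{\pm}e_1^{\mp}=e_1^{\mp}e_0^{\pm}$, and $(e_i^\pm)^3e_j^\pm-[3]_q(e_i^\pm)^2e_j^\pm e_i^\pm+[3]_qe_i^\pm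 e_j^\pm(e_i^\pm)^2-e_j^\pm(e_i^\pm)^3=0$ ($i\ne j$). It is a Hopf algebra with comultiplication $\Delta(e_i^+)=e_i^+\otimes K_i+1\otimes e_i^+$, $\Delta(e_i^-)=e_i^-\otimes1+K_i^{-1}\otimes e_i^-$, $\Delta(K_i)=K_i\otimes K_i$, and the tensor product $V\otimes W$ of modules is a module via $z(v\otimes w)=\Delta(z)(v\otimes w)$. A standard module of diameter $1$ is a module $V(\alpha)$ ($\alpha\in\mathbb F$ nonzero) with basis $x,y$ and $K_1x=qx$, $K_1y=q^{-1}y$, $e_1^-x=y$, $e_1^-y=0$, $e_1^+x=0$, $e_1^+y=x$, $K_0x=q^{-1}x$, $K_0y=qy$, $e_0^-x=0$, $e_0^-y=q\alpha^{-1}x$, $e_0^+x=q^{-1}\alpha y$, $e_0^+y=0$. Fix nonzero $b,c,b^*,c^*\in\mathbb F$ and $u,v,u^*,v^*\in\mathbb F$ with $uv^*=-bb^*q^{-1}(q-q^{-1})^2$ and $vu^*=-cc^*q^{-1}(q-q^{-1})^2$; set $R=ue_0^++ve_1^-K_1$ and $L=u^*e_1^++v^*e_0^-K_0$ (and $R^0=L^0=1$). *)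

theory Defs
  imports Main "HOL-Computational_Algebra.Polynomial" "HOL-Library.Product_Plus"
begin

text \<open>Action of the generators e0+, e0-, e1+, e1-, K0, K0^-1, K1, K1^-1
  of U_q(sl2-hat) on a vector space (carrier type 'w).\<close>
record 'w uqmod =
  E0p :: "'w \<Rightarrow> 'w"
  E0m :: "'w \<Rightarrow> 'w"
  E1p :: "'w \<Rightarrow> 'w"
  E1m :: "'w \<Rightarrow> 'w"
  K0  :: "'w \<Rightarrow> 'w"
  K0i :: "'w \<Rightarrow> 'w"
  K1  :: "'w \<Rightarrow> 'w"
  K1i :: "'w \<Rightarrow> 'w"

definition qnum :: "'a::field \<Rightarrow> nat \<Rightarrow> 'a" where
  "qnum q n = (q ^ n - inverse q ^ n) / (q - inverse q)"

definition serre :: "('w::ab_group_add \<Rightarrow> 'w) \<Rightarrow> ('w \<Rightarrow> 'w) \<Rightarrow> ('a \<Rightarrow> 'w \<Rightarrow> 'w) \<Rightarrow> 'a \<Rightarrow> bool" where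
  "serre a b sc t \<longleftrightarrow> (\<forall>w. a (a (a (b w))) - sc t (a (a (b (a w)))) + sc t (a (b (a (a w)))) - b (a (a (a w))) = 0)"

definition is_uq_module :: "('a::field \<Rightarrow> 'w::ab_group_add \<Rightarrow> 'w) \<Rightarrow> 'a \<Rightarrow> 'w uqmod \<Rightarrow> bool" where
  "is_uq_module sc q W \<longleftrightarrow>
     (\<forall>f \<in> {E0p W, E0m W, E1p W, E1m W, K0 W, K0i W, K1 W, K1i W}. Vector_Spaces.linear sc sc f) \<and>
     K0 W \<circ> K0i W = id \<and> K0i W \<circ> K0 W = id \<and> K1 W \<circ> K1i W = id \<and> K1i W \<circ> K1 W = id \<and>
     K0 W \<circ> K1 W = K1 W \<circ> K0 W \<and>
     K0 W \<circ> E0p W \<circ> K0i W = (\<lambda>w. sc (q ^ 2) (E0p W w)) \<and>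
     K0 W \<circ> E0m W \<circ> K0i W = (\<lambda>w. sc (inverse q ^ 2) (E0m W w)) \<and>
     K1 W \<circ> E1p W \<circ> K1i W = (\<lambda>w. sc (q ^ 2) (E1p W w)) \<and>
     K1 W \<circ> E1m W \<circ> K1i W = (\<lambda>w. sc (inverse q ^ 2) (E1m W w)) \<and>
     K0 W \<circ> E1p W \<circ> K0i W = (\<lambda>w. sc (inverse q ^ 2) (E1p W w)) \<and>
     K0 W \<circ> E1m W \<circ> K0i W = (\<lambda>w. sc (q ^ 2) (E1m W w)) \<and>
     K1 W \<circ> E0p W \<circ> K1i W = (\<lambda>w. sc (inverse q ^ 2) (E0p W w)) \<and>
     K1 W \<circ> E0m W \<circ> K1i W = (\<lambda>w. sc (q ^ 2) (E0m W w)) \<and>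
     (\<forall>w. E0p W (E0m W w) - E0m W (E0p W w) = sc (inverse (q - inverse q)) (K0 W w - K0i W w)) \<and>
     (\<forall>w. E1p W (E1m W w) - E1m W (E1p W w) = sc (inverse (q - inverse q)) (K1 W w - K1i W w)) \<and>
     E0p W \<circ> E1m W = E1m W \<circ> E0p W \<and>
     E0m W \<circ> E1p W = E1p W \<circ> E0m W \<and>
     serre (E0p W) (E1p W) sc (qnum q 3) \<and> serre (E1p W) (E0p W) sc (qnum q 3) \<and>
     serre (E0m W) (E1m W) sc (qnum q 3) \<and> serre (E1m W) (E0m W) sc (qnum q 3)"

text \<open>The standard module V(alpha) of diameter 1, in coordinates: (a,b) stands for a x + b y.\<close>
definition stdV :: "'a::field \<Rightarrow> 'a \<Rightarrow> ('a \<times> 'a) uqmod" where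
  "stdV q \<alpha> = \<lparr> E0p = (\<lambda>(a,b). (0, inverse q * \<alpha> * a)),
                 E0m = (\<lambda>(a,b). (q * inverse \<alpha> * b, 0)),
                 E1p = (\<lambda>(a,b). (b, 0)),
                 E1m = (\<lambda>(a,b). (0, a)),
                 K0  = (\<lambda>(a,b). (inverse q * a, q * b)),
                 K0i = (\<lambda>(a,b). (q * a, inverse q * b)),
                 K1  = (\<lambda>(a,b). (q * a, inverse q * b)),
                 K1i = (\<lambda>(a,b). (inverse q * a, q * b)) \<rparr>"

text \<open>V (x) W is represented as W x W: the pair (w1,w2) stands for x(x)w1 + y(x)w2.
  tensor X Y is the operator v(x)w |-> Xv (x) Yw, X a linear operator on V in coordinates.\<close>
definition tensor :: "('a::field \<Rightarrow> 'w::ab_group_add \<Rightarrow> 'w) \<Rightarrow> ('a \<times> 'a \<Rightarrow> 'a \<times> 'a) \<Rightarrow> ('w \<Rightarrow> 'w) \<Rightarrow> ('w \<times> 'w \<Rightarrow> 'w \<times> 'w)" where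
  "tensor sc X Y = (\<lambda>(w1, w2). let (a, c) = X (1, 0); (b, d) = X (0, 1) in
       (sc a (Y w1) + sc b (Y w2), sc c (Y w1) + sc d (Y w2)))"

definition vwscale :: "('a \<Rightarrow> 'w \<Rightarrow> 'w) \<Rightarrow> 'a \<Rightarrow> 'w \<times> 'w \<Rightarrow> 'w \<times> 'w" where
  "vwscale sc c = (\<lambda>(w1, w2). (sc c w1, sc c w2))"

text \<open>Module structure on V (x) W via the comultiplication Delta.\<close>
definition tens_mod :: "('a::field \<Rightarrow> 'w::ab_group_add \<Rightarrow> 'w) \<Rightarrow> ('a \<times> 'a) uqmod \<Rightarrow> 'w uqmod \<Rightarrow> ('w \<times> 'w) uqmod" where
  "tens_mod sc V W = \<lparr>
     E0p = (\<lambda>p. tensor sc (E0p V) (K0 W) p + tensor sc id (E0p W) p),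
     E0m = (\<lambda>p. tensor sc (E0m V) id p + tensor sc (K0i V) (E0m W) p),
     E1p = (\<lambda>p. tensor sc (E1p V) (K1 W) p + tensor sc id (E1p W) p),
     E1m = (\<lambda>p. tensor sc (E1m V) id p + tensor sc (K1i V) (E1m W) p),
     K0  = tensor sc (K0 V) (K0 W),
     K0i = tensor sc (K0i V) (K0i W),
     K1  = tensor sc (K1 V) (K1 W),
     K1i = tensor sc (K1i V) (K1i W) \<rparr>"

definition Rop :: "('a \<Rightarrow> 'm::plus \<Rightarrow> 'm) \<Rightarrow> 'a \<Rightarrow> 'a \<Rightarrow> 'm uqmod \<Rightarrow> 'm \<Rightarrow> 'm" where
  "Rop sc u v M = (\<lambda>w. sc u (E0p M w) + sc v (E1m M (K1 M w)))"

definition Lop :: "('a \<Rightarrow> 'm::plus \<Rightarrow> 'm) \<Rightarrow> 'a \<Rightarrow> 'a \<Rightarrow> 'm uqmod \<Rightarrow> 'm \<Rightarrow> 'm" where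
  "Lop sc us vs M = (\<lambda>w. sc us (E1p M w) + sc vs (E0m M (K0 M w)))"

definition Rn :: "('a::field \<Rightarrow> 'w::ab_group_add \<Rightarrow> 'w) \<Rightarrow> 'a \<Rightarrow> 'a \<Rightarrow> 'a \<Rightarrow> ('a \<times> 'a) uqmod \<Rightarrow> 'w uqmod \<Rightarrow> nat \<Rightarrow> 'w \<times> 'w \<Rightarrow> 'w \<times> 'w" where
  "Rn sc q u v V W n = (\<lambda>p.
     vwscale sc (u * q ^ (n - 1)) (tensor sc (E0p V) ((Rop sc u v W ^^ (n - 1)) \<circ> K0 W) p)
   + vwscale sc (v * inverse q ^ (n - 1)) (tensor sc (E1m V \<circ> K1 V) ((Rop sc u v W ^^ (n - 1)) \<circ> K1 W) p))"

definition Ln :: "('a::field \<Rightarrow> 'w::ab_group_add \<Rightarrow> 'w) \<Rightarrow> 'a \<Rightarrow> 'a \<Rightarrow> 'a \<Rightarrow> ('a \<times> 'a) uqmod \<Rightarrow> 'w uqmod \<Rightarrow> nat \<Rightarrow> 'w \<times> 'w \<Rightarrow> 'w \<times> 'w" where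
  "Ln sc q us vs V W n = (\<lambda>p.
     vwscale sc (us * inverse q ^ (n - 1)) (tensor sc (E1p V) (K1 W \<circ> (Lop sc us vs W ^^ (n - 1))) p)
   + vwscale sc (vs * q ^ (n - 1)) (tensor sc (E0m V \<circ> K0 V) (K0 W \<circ> (Lop sc us vs W ^^ (n - 1))) p))"

end

theory Submission
  imports Defs
begin


lemma qd_nz: fixes q :: "'a::field" assumes "q \<noteq> 0" "q^2 \<noteq> 1" shows "q - inverse q \<noteq> 0"
proof
  assume "q - inverse q = 0"
  then have "q * q = inverse q * q" by simp
  with assms show False by (simp add: power2_eq_square)
qed

lemma qnum_mult: fixes q :: "'a::field" assumes "q \<noteq> 0" "q^2 \<noteq> 1"
  shows "qnum q n * (q - inverse q) = q^n - inverse q ^ n"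
  using qd_nz[OF assms] unfolding qnum_def by simp

lemma qnum1: fixes q :: "'a::field" assumes "q \<noteq> 0" "q^2 \<noteq> 1" shows "qnum q 1 = 1"
  using qd_nz[OF assms] unfolding qnum_def by simp

lemma diff0: "(x::'a::ab_group_add) - y = z \<Longrightarrow> z = 0 \<Longrightarrow> x = y" by simp

lemma qsteps: fixes q :: "'a::field" assumes "q \<noteq> 0" "q^2 \<noteq> 1"
  shows "qnum q (Suc (Suc m)) * q^(Suc m) = qnum q (Suc m) * q^m + q^(2*Suc m)"
    and "qnum q (Suc (Suc m)) * inverse q^(Suc m) = qnum q (Suc m) * inverse q^m + inverse q^(2*Suc m)"
    and "qnum q (Suc (Suc m)) * inverse q^(Suc m) = qnum q (Suc m) * inverse q^m * inverse q ^ 2 + 1"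
    and "qnum q (Suc (Suc m)) * q^(Suc m) = qnum q (Suc m) * q^m * q ^ 2 + 1"
proof -
  define r where "r = inverse q"
  define Q where "Q = q^m"
  define Rm where "Rm = r^m"
  define N1 where "N1 = qnum q (Suc m)"
  define N2 where "N2 = qnum q (Suc (Suc m))"
  have dnz: "q - r \<noteq> 0" using qd_nz[OF assms] by (simp add: r_def)
  have h1: "q * r - 1 = 0" using assms by (simp add: r_def)
  have h2: "Q * Rm - 1 = 0" using assms by (simp add: Q_def Rm_def r_def power_mult_distrib[symmetric])
  have e1: "N1 * (q - r) - (q * Q - r * Rm) = 0" using qnum_mult[OF assms, of "Suc m"] by (simp add: N1_def r_def Q_def Rm_def)
  have e2: "N2 * (q - r) - (q*q * Q - r*r * Rm) = 0" using qnum_mult[OF assms, of "Suc (Suc m)"] by (simp add: N2_def r_def Q_def Rm_def)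
  have "N2 * (q * Q) * (q - r) = (N1 * Q + q*q*Q*Q) * (q - r)"
    apply (rule diff0[where z = "(N2*(q-r) - (q*q*Q - r*r*Rm))*(q*Q) - (N1*(q-r) - (q*Q - r*Rm))*Q + (q*r-1)*(q*Q*Q - r*Q*Rm)"])
    apply (simp add: algebra_simps) using e1 e2 h1 by simp
  then show "qnum q (Suc (Suc m)) * q^(Suc m) = qnum q (Suc m) * q^m + q^(2*Suc m)"
    using dnz by (simp add: N1_def N2_def Q_def power_mult power2_eq_square mult_ac)
  have "N2 * (r * Rm) * (q - r) = (N1 * Rm + r*r*Rm*Rm) * (q - r)"
    apply (rule diff0[where z = "(N2*(q-r) - (q*q*Q - r*r*Rm))*(r*Rm) - (N1*(q-r) - (q*Q - r*Rm))*Rm + (q*r-1)*(q*Q*Rm - r*Rm*Rm)"])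
    apply (simp add: algebra_simps) using e1 e2 h1 by simp
  then show "qnum q (Suc (Suc m)) * inverse q^(Suc m) = qnum q (Suc m) * inverse q^m + inverse q^(2*Suc m)"
    using dnz by (simp add: N1_def N2_def Rm_def r_def power_mult power2_eq_square mult_ac)
  have "N2 * (r * Rm) * (q - r) = (N1 * Rm * (r*r) + 1) * (q - r)"
    apply (rule diff0[where z = "(N2*(q-r) - (q*q*Q - r*r*Rm))*(r*Rm) - (N1*(q-r) - (q*Q - r*Rm))*Rm*(r*r) + (Q*Rm-1)*q*r*(q-r) + (q*r-1)*(q-r)"])
    apply (simp add: algebra_simps) using e1 e2 h1 h2 by simp
  then show "qnum q (Suc (Suc m)) * inverse q^(Suc m) = qnum q (Suc m) * inverse q^m * inverse q ^ 2 + 1"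
    using dnz by (simp add: N1_def N2_def Rm_def r_def power_mult power2_eq_square mult_ac)
  have "N2 * (q * Q) * (q - r) = (N1 * Q * (q*q) + 1) * (q - r)"
    apply (rule diff0[where z = "(N2*(q-r) - (q*q*Q - r*r*Rm))*(q*Q) - (N1*(q-r) - (q*Q - r*Rm))*Q*(q*q) + (q-r)*((q*r-1)*Q*Rm + (Q*Rm - 1))"])
    apply (simp add: algebra_simps) using e1 e2 h1 h2 by simp
  then show "qnum q (Suc (Suc m)) * q^(Suc m) = qnum q (Suc m) * q^m * q ^ 2 + 1"
    using dnz by (simp add: N1_def N2_def Q_def power_mult power2_eq_square mult_ac)
qed



lemma lin_add: assumes "Vector_Spaces.linear sc sc f" shows "f (x+y) = f x + f y"
  using assms unfolding linear_iff_module_hom by (rule module_hom.add)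
lemma lin_scale: assumes "Vector_Spaces.linear sc sc f" shows "f (sc a x) = sc a (f x)"
  using assms unfolding linear_iff_module_hom by (rule module_hom.scale)

lemma conj_rel: "K \<circ> E \<circ> Ki = (\<lambda>w. sc c (E w)) \<Longrightarrow> Ki \<circ> K = id \<Longrightarrow> K (E w) = sc c (E (K w))"
  by (drule fun_cong[where x="K w"], drule fun_cong[where x=w]) (simp add: o_def)

locale setting = vector_space sc for sc :: "'a::field \<Rightarrow> 'w::ab_group_add \<Rightarrow> 'w" +
  fixes q :: 'a and W :: "'w uqmod"
  assumes modW: "is_uq_module sc q W" and qnz: "q \<noteq> 0" and qsq: "q^2 \<noteq> 1"
begin

lemma lins: "Vector_Spaces.linear sc sc (E0p W)" "Vector_Spaces.linear sc sc (E0m W)" "Vector_Spaces.linear sc sc (E1p W)" "Vector_Spaces.linear sc sc (E1m W)"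
  "Vector_Spaces.linear sc sc (K0 W)" "Vector_Spaces.linear sc sc (K1 W)"
  using modW unfolding is_uq_module_def by auto

lemmas linsimps = lins[THEN lin_add] lins[THEN lin_scale]

lemma invs: "K0i W \<circ> K0 W = id" "K1i W \<circ> K1 W = id" using modW unfolding is_uq_module_def by auto

lemma rels:
  "K0 W (E0p W w) = sc (q^2) (E0p W (K0 W w))"
  "K0 W (E1m W w) = sc (q^2) (E1m W (K0 W w))"
  "K1 W (E0p W w) = sc (inverse q^2) (E0p W (K1 W w))"
  "K1 W (E1m W w) = sc (inverse q^2) (E1m W (K1 W w))"
  "K1 W (E1p W w) = sc (q^2) (E1p W (K1 W w))"
  "K1 W (E0m W w) = sc (q^2) (E0m W (K1 W w))"
  "K0 W (E1p W w) = sc (inverse q^2) (E1p W (K0 W w))"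
  "K0 W (E0m W w) = sc (inverse q^2) (E0m W (K0 W w))"
proof -
  have r: "K0 W \<circ> E0p W \<circ> K0i W = (\<lambda>w. sc (q ^ 2) (E0p W w))"
     "K0 W \<circ> E1m W \<circ> K0i W = (\<lambda>w. sc (q ^ 2) (E1m W w))"
     "K1 W \<circ> E0p W \<circ> K1i W = (\<lambda>w. sc (inverse q ^ 2) (E0p W w))"
     "K1 W \<circ> E1m W \<circ> K1i W = (\<lambda>w. sc (inverse q ^ 2) (E1m W w))"
     "K1 W \<circ> E1p W \<circ> K1i W = (\<lambda>w. sc (q ^ 2) (E1p W w))"
     "K1 W \<circ> E0m W \<circ> K1i W = (\<lambda>w. sc (q ^ 2) (E0m W w))"
     "K0 W \<circ> E1p W \<circ> K0i W = (\<lambda>w. sc (inverse q ^ 2) (E1p W w))"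
     "K0 W \<circ> E0m W \<circ> K0i W = (\<lambda>w. sc (inverse q ^ 2) (E0m W w))"
    using modW unfolding is_uq_module_def by simp_all
  show "K0 W (E0p W w) = sc (q^2) (E0p W (K0 W w))" using conj_rel[of "K0 W" "E0p W" "K0i W" sc "q^2" w] r(1) invs(1) by blast
  show "K0 W (E1m W w) = sc (q^2) (E1m W (K0 W w))" using conj_rel[of "K0 W" "E1m W" "K0i W" sc "q^2" w] r(2) invs(1) by blast
  show "K1 W (E0p W w) = sc (inverse q^2) (E0p W (K1 W w))" using conj_rel[of "K1 W" "E0p W" "K1i W" sc "inverse q^2" w] r(3) invs(2) by blast
  show "K1 W (E1m W w) = sc (inverse q^2) (E1m W (K1 W w))" using conj_rel[of "K1 W" "E1m W" "K1i W" sc "inverse q^2" w] r(4) invs(2) by blast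
  show "K1 W (E1p W w) = sc (q^2) (E1p W (K1 W w))" using conj_rel[of "K1 W" "E1p W" "K1i W" sc "q^2" w] r(5) invs(2) by blast
  show "K1 W (E0m W w) = sc (q^2) (E0m W (K1 W w))" using conj_rel[of "K1 W" "E0m W" "K1i W" sc "q^2" w] r(6) invs(2) by blast
  show "K0 W (E1p W w) = sc (inverse q^2) (E1p W (K0 W w))" using conj_rel[of "K0 W" "E1p W" "K0i W" sc "inverse q^2" w] r(7) invs(1) by blast
  show "K0 W (E0m W w) = sc (inverse q^2) (E0m W (K0 W w))" using conj_rel[of "K0 W" "E0m W" "K0i W" sc "inverse q^2" w] r(8) invs(1) by blast
qed

lemma K01: "K0 W (K1 W w) = K1 W (K0 W w)"
  using modW unfolding is_uq_module_def by (metis comp_apply)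

lemma flip: assumes "K (E w) = sc c (E (K w))" "c \<noteq> 0" shows "E (K w) = sc (inverse c) (K (E w))"
  using assms by simp

lemma rels2:
  "E1p W (K1 W w) = sc (inverse q^2) (K1 W (E1p W w))"
  "E0m W (K1 W w) = sc (inverse q^2) (K1 W (E0m W w))"
  "E1p W (K0 W w) = sc (q^2) (K0 W (E1p W w))"
  "E0m W (K0 W w) = sc (q^2) (K0 W (E0m W w))"
  using flip[where K="K1 W" and E="E1p W", OF rels(5)] flip[where K="K1 W" and E="E0m W", OF rels(6)] flip[where K="K0 W" and E="E1p W", OF rels(7)] flip[where K="K0 W" and E="E0m W", OF rels(8)] qnz
  by (simp_all add: power_inverse)

lemma R_add: "Rop sc u v W (x + y) = Rop sc u v W x + Rop sc u v W y"
  unfolding Rop_def by (simp add: linsimps algebra_simps)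
lemma R_scale: "Rop sc u v W (sc a x) = sc a (Rop sc u v W x)"
  unfolding Rop_def by (simp add: linsimps algebra_simps mult.commute)
lemma L_add: "Lop sc u v W (x + y) = Lop sc u v W x + Lop sc u v W y"
  unfolding Lop_def by (simp add: linsimps algebra_simps)
lemma L_scale: "Lop sc u v W (sc a x) = sc a (Lop sc u v W x)"
  unfolding Lop_def by (simp add: linsimps algebra_simps mult.commute)

lemma Rpow_add: "(Rop sc u v W ^^ k) (x + y) = (Rop sc u v W ^^ k) x + (Rop sc u v W ^^ k) y"
  by (induct k) (simp_all add: R_add)
lemma Rpow_scale: "(Rop sc u v W ^^ k) (sc a x) = sc a ((Rop sc u v W ^^ k) x)"
  by (induct k) (simp_all add: R_scale)

lemma K0R: "K0 W (Rop sc u v W w) = sc (q^2) (Rop sc u v W (K0 W w))"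
  unfolding Rop_def by (simp add: linsimps rels K01 algebra_simps mult.commute)
lemma K1R: "K1 W (Rop sc u v W w) = sc (inverse q^2) (Rop sc u v W (K1 W w))"
  unfolding Rop_def by (simp add: linsimps rels K01 algebra_simps mult.commute)

lemma K0Rpow: "K0 W ((Rop sc u v W ^^ k) w) = sc (q^(2*k)) ((Rop sc u v W ^^ k) (K0 W w))"
  by (induct k) (simp_all add: K0R R_scale power_add power2_eq_square mult.commute)
lemma K1Rpow: "K1 W ((Rop sc u v W ^^ k) w) = sc (inverse q^(2*k)) ((Rop sc u v W ^^ k) (K1 W w))"
  by (induct k) (simp_all add: K1R R_scale power_add power2_eq_square mult.commute)

lemma LK1: "Lop sc u v W (K1 W w) = sc (inverse q^2) (K1 W (Lop sc u v W w))"
  unfolding Lop_def by (simp add: linsimps rels2 K01[symmetric] algebra_simps mult.commute)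
lemma LK0: "Lop sc u v W (K0 W w) = sc (q^2) (K0 W (Lop sc u v W w))"
  unfolding Lop_def by (simp add: linsimps rels2 algebra_simps mult.commute)

lemma RT: "Rop (vwscale sc) u v (tens_mod sc (stdV q \<alpha>) W) (w1, w2) =
   (Rop sc u v W w1, Rop sc u v W w2 + sc (u * (inverse q * \<alpha>)) (K0 W w1) + sc (v * q) (K1 W w1))"
  unfolding Rop_def tens_mod_def stdV_def tensor_def vwscale_def
  by (simp add: linsimps algebra_simps qnz)

lemma LT: "Lop (vwscale sc) us vs (tens_mod sc (stdV q \<alpha>) W) (w1, w2) =
   (Lop sc us vs W w1 + sc us (K1 W w2) + sc (vs * (q^2 * inverse \<alpha>)) (K0 W w2), Lop sc us vs W w2)"
  unfolding Lop_def tens_mod_def stdV_def tensor_def vwscale_def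
  by (simp add: linsimps algebra_simps qnz power2_eq_square)


lemma fs: "(f^^Suc n) x = f ((f^^n) x)" by simp

lemma RTpow: "(Rop (vwscale sc) u v (tens_mod sc (stdV q \<alpha>) W) ^^ Suc m) (w1, w2) =
  ((Rop sc u v W ^^ Suc m) w1, (Rop sc u v W ^^ Suc m) w2
     + sc (qnum q (Suc m) * u * q^m * (inverse q * \<alpha>)) ((Rop sc u v W ^^ m) (K0 W w1))
     + sc (qnum q (Suc m) * v * inverse q ^ m * q) ((Rop sc u v W ^^ m) (K1 W w1)))"
proof (induct m)
  case 0
  then show ?case using qnum1[OF qnz qsq] by (simp add: RT)
next
  case (Suc m)
  let ?T = "Rop (vwscale sc) u v (tens_mod sc (stdV q \<alpha>) W)"
  let ?R = "Rop sc u v W"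
  have "(?T^^Suc(Suc m)) (w1,w2) = ?T ((?T^^Suc m)(w1,w2))" by (rule fs)
  also have "... = ?T ((?R ^^ Suc m) w1, (?R ^^ Suc m) w2
     + sc (qnum q (Suc m) * u * q^m * (inverse q * \<alpha>)) ((?R ^^ m) (K0 W w1))
     + sc (qnum q (Suc m) * v * inverse q ^ m * q) ((?R ^^ m) (K1 W w1)))" by (subst Suc.hyps) (rule refl)
  also have "... = (?R ((?R ^^ Suc m) w1), ?R ((?R ^^ Suc m) w2
     + sc (qnum q (Suc m) * u * q^m * (inverse q * \<alpha>)) ((?R ^^ m) (K0 W w1))
     + sc (qnum q (Suc m) * v * inverse q ^ m * q) ((?R ^^ m) (K1 W w1)))
     + sc (u * (inverse q * \<alpha>)) (K0 W ((?R ^^ Suc m) w1)) + sc (v * q) (K1 W ((?R ^^ Suc m) w1)))"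
    by (rule RT)
  finally have e: "(?T^^Suc(Suc m)) (w1,w2) = (?R ((?R ^^ Suc m) w1), ?R ((?R ^^ Suc m) w2
     + sc (qnum q (Suc m) * u * q^m * (inverse q * \<alpha>)) ((?R ^^ m) (K0 W w1))
     + sc (qnum q (Suc m) * v * inverse q ^ m * q) ((?R ^^ m) (K1 W w1)))
     + sc (u * (inverse q * \<alpha>)) (K0 W ((?R ^^ Suc m) w1)) + sc (v * q) (K1 W ((?R ^^ Suc m) w1)))" .
  have k0: "K0 W ((?R^^Suc m) w1) = sc (q^(2*Suc m)) ((?R^^Suc m)(K0 W w1))" by (rule K0Rpow)
  have k1: "K1 W ((?R^^Suc m) w1) = sc (inverse q^(2*Suc m)) ((?R^^Suc m)(K1 W w1))" by (rule K1Rpow)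
  have cA: "qnum q (Suc (Suc m)) * u * q ^ Suc m * (inverse q * \<alpha>) = qnum q (Suc m) * u * q^m * (inverse q * \<alpha>) + u * (inverse q * \<alpha>) * q^(2*Suc m)"
    using arg_cong[of _ _ "\<lambda>x. x*(u*(inverse q * \<alpha>))", OF qsteps(1)[OF qnz qsq, of m]] by (simp add: algebra_simps)
  have cB: "qnum q (Suc (Suc m)) * v * inverse q ^ Suc m * q = qnum q (Suc m) * v * inverse q ^ m * q + v * q * inverse q^(2*Suc m)"
    using arg_cong[of _ _ "\<lambda>x. x*(v*q)", OF qsteps(2)[OF qnz qsq, of m]] by (simp add: algebra_simps)
  show ?case unfolding e k0 k1 cA cB
    by (simp only: R_add R_scale fs scale_scale scale_left_distrib add_ac)
qed


lemma LTpow: "(Lop (vwscale sc) us vs (tens_mod sc (stdV q \<alpha>) W) ^^ Suc m) (w1, w2) =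
  ((Lop sc us vs W ^^ Suc m) w1
     + sc (qnum q (Suc m) * us * inverse q ^ m) (K1 W ((Lop sc us vs W ^^ m) w2))
     + sc (qnum q (Suc m) * vs * q ^ m * (q^2 * inverse \<alpha>)) (K0 W ((Lop sc us vs W ^^ m) w2)),
   (Lop sc us vs W ^^ Suc m) w2)"
proof (induct m)
  case 0
  then show ?case using qnum1[OF qnz qsq] by (simp add: LT)
next
  case (Suc m)
  let ?T = "Lop (vwscale sc) us vs (tens_mod sc (stdV q \<alpha>) W)"
  let ?L = "Lop sc us vs W"
  have "(?T^^Suc(Suc m)) (w1,w2) = ?T ((?T^^Suc m)(w1,w2))" by (rule fs)
  also have "... = ?T ((?L ^^ Suc m) w1
     + sc (qnum q (Suc m) * us * inverse q ^ m) (K1 W ((?L ^^ m) w2))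
     + sc (qnum q (Suc m) * vs * q ^ m * (q^2 * inverse \<alpha>)) (K0 W ((?L ^^ m) w2)),
   (?L ^^ Suc m) w2)" by (subst Suc.hyps) (rule refl)
  also have "... = (?L ((?L ^^ Suc m) w1
     + sc (qnum q (Suc m) * us * inverse q ^ m) (K1 W ((?L ^^ m) w2))
     + sc (qnum q (Suc m) * vs * q ^ m * (q^2 * inverse \<alpha>)) (K0 W ((?L ^^ m) w2)))
     + sc us (K1 W ((?L ^^ Suc m) w2)) + sc (vs * (q^2 * inverse \<alpha>)) (K0 W ((?L ^^ Suc m) w2)),
     ?L ((?L ^^ Suc m) w2))"
    by (rule LT)
  finally have e: "(?T^^Suc(Suc m)) (w1,w2) = (?L ((?L ^^ Suc m) w1
     + sc (qnum q (Suc m) * us * inverse q ^ m) (K1 W ((?L ^^ m) w2))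
     + sc (qnum q (Suc m) * vs * q ^ m * (q^2 * inverse \<alpha>)) (K0 W ((?L ^^ m) w2)))
     + sc us (K1 W ((?L ^^ Suc m) w2)) + sc (vs * (q^2 * inverse \<alpha>)) (K0 W ((?L ^^ Suc m) w2)),
     ?L ((?L ^^ Suc m) w2))" .
  have cC: "qnum q (Suc (Suc m)) * us * inverse q ^ Suc m = qnum q (Suc m) * us * inverse q ^ m * inverse q ^ 2 + us"
    using arg_cong[of _ _ "\<lambda>x. x*us", OF qsteps(3)[OF qnz qsq, of m]] by (simp add: algebra_simps)
  have cD: "qnum q (Suc (Suc m)) * vs * q ^ Suc m * (q^2 * inverse \<alpha>) = qnum q (Suc m) * vs * q ^ m * (q^2 * inverse \<alpha>) * q^2 + vs * (q^2 * inverse \<alpha>)"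
    using arg_cong[of _ _ "\<lambda>x. x*(vs * (q^2 * inverse \<alpha>))", OF qsteps(4)[OF qnz qsq, of m]] by (simp add: algebra_simps)
  show ?case unfolding e cC cD
    by (simp only: L_add L_scale LK0 LK1 fs scale_scale scale_left_distrib add_ac)
qed

end

theorem lemma7p10:
  fixes q \<alpha> b c bs cs u v us vs :: "'a::field"
    and sc :: "'a \<Rightarrow> 'w::ab_group_add \<Rightarrow> 'w"
    and W :: "'w uqmod"
    and n :: nat
  assumes alg_closed: "\<forall>p::'a poly. 0 < degree p \<longrightarrow> (\<exists>x. poly p x = 0)"
    and q_nz: "q \<noteq> 0" and q_sq: "q ^ 2 \<noteq> 1"
    and alpha_nz: "\<alpha> \<noteq> 0"
    and b_nz: "b \<noteq> 0" and c_nz: "c \<noteq> 0" and bs_nz: "bs \<noteq> 0" and cs_nz: "cs \<noteq> 0"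
    and uvs: "u * vs = - b * bs * inverse q * (q - inverse q) ^ 2"
    and vus: "v * us = - c * cs * inverse q * (q - inverse q) ^ 2"
    and vs_W: "Vector_Spaces.vector_space sc"
    and mod_W: "is_uq_module sc q W"
    and n_pos: "1 \<le> n"
  shows "Rop (vwscale sc) u v (tens_mod sc (stdV q \<alpha>) W) ^^ n
           = (\<lambda>p. tensor sc id (Rop sc u v W ^^ n) p
                  + vwscale sc (qnum q n) (Rn sc q u v (stdV q \<alpha>) W n p))
       \<and> Lop (vwscale sc) us vs (tens_mod sc (stdV q \<alpha>) W) ^^ n
           = (\<lambda>p. tensor sc id (Lop sc us vs W ^^ n) p
                  + vwscale sc (qnum q n) (Ln sc q us vs (stdV q \<alpha>) W n p))"
  proof -
  interpret setting sc q W
    by (intro setting.intro vs_W setting_axioms.intro mod_W q_nz q_sq)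
  obtain m where n: "n = Suc m" using n_pos by (cases n) auto
  show ?thesis
  proof (intro conjI ext)
    fix p :: "'w \<times> 'w"
    obtain w1 w2 where p: "p = (w1, w2)" by (cases p)
    show "(Rop (vwscale sc) u v (tens_mod sc (stdV q \<alpha>) W) ^^ n) p
       = tensor sc id (Rop sc u v W ^^ n) p + vwscale sc (qnum q n) (Rn sc q u v (stdV q \<alpha>) W n p)"
      unfolding p n RTpow by (simp add: tensor_def Rn_def stdV_def vwscale_def scale_right_distrib ac_simps)
    show "(Lop (vwscale sc) us vs (tens_mod sc (stdV q \<alpha>) W) ^^ n) p
       = tensor sc id (Lop sc us vs W ^^ n) p + vwscale sc (qnum q n) (Ln sc q us vs (stdV q \<alpha>) W n p)"
      unfolding p n LTpow by (simp add: tensor_def Ln_def stdV_def vwscale_def scale_right_distrib power2_eq_square ac_simps)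
  qed
qed

end
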